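(* For every closed recHML formula $\varphi$, $[\![\varphi]\!]_F\cap\mathrm{Act}^\omega=[\![\varphi]\!]_L$.
   Context: Fix a finite set $\mathrm{Act}$ of actions. recHML formulae: $\varphi::=\mathrm{tt}\mid\mathrm{ff}\mid\varphi\vee\varphi\mid\varphi\wedge\varphi\mid\langle A\rangle\varphi\mid[A]\varphi\mid\min X.\varphi\mid\max X.\varphi\mid X$ ($A\subseteq\mathrm{Act}$), guarded. For a set of traces $D$ (either $D=\mathrm{Act}^\omega$, giving the linear-time semantics $[\![\cdot]\!]_L$, or $D=\mathrm{Fin}=\mathrm{Act}^\omega\cup\mathrm{Act}^*$, giving the finfinite semantics $[\![\cdot]\!]_F$) and an environment $\sigma$ from variables to subsets of $D$: $[\![\mathrm{tt}]\!]=D$, $[\![\mathrm{ff}]\!]=\emptyset$, $\vee,\wedge$ are union/intersection, $[\![\langle A\rangle\varphi,\sigma]\!]=\{ag\in D\mid a\in A,g\in[\![\varphi,\sigma]\!]\}$, $[\![[A]\varphi,\sigma]\!]=\{g\in D\mid\forall a\in A,\forall g'.\ g=ag'\Rightarrow g'\in[\![\varphi,\sigma]\!]\}$, $[\![\min X.\varphi,\sigma]\!]=\bigcap\{S\subseteq D\mid[\![\varphi,\sigma[X\mapsto S]]\!]\subseteq S\}$, $[\![\max X.\varphi,\sigma]\!]=\bigcup\{S\subseteq D\mid S\subseteq[\![\varphi,\sigma[X\mapsto S]]\!]\}$, $[\![X,\sigma]\!]=\sigma(X)$. *)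

theory Defs
  imports Main "HOL-Library.Stream"
begin

datatype ('a, 'x) form =
    TT | FF
  | Or "('a, 'x) form" "('a, 'x) form"
  | And "('a, 'x) form" "('a, 'x) form"
  | Dia "'a set" "('a, 'x) form"
  | Box "'a set" "('a, 'x) form"
  | Min 'x "('a, 'x) form"
  | Max 'x "('a, 'x) form"
  | Var 'x

fun fv :: "('a, 'x) form \<Rightarrow> 'x set" where
  "fv TT = {}" | "fv FF = {}"
| "fv (Or p q) = fv p \<union> fv q"
| "fv (And p q) = fv p \<union> fv q"
| "fv (Dia A p) = fv p"
| "fv (Box A p) = fv p"
| "fv (Min X p) = fv p - {X}"
| "fv (Max X p) = fv p - {X}"
| "fv (Var X) = {X}"

definition closed :: "('a, 'x) form \<Rightarrow> bool" where
  "closed p \<longleftrightarrow> fv p = {}"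

fun guarded_in :: "'x \<Rightarrow> ('a, 'x) form \<Rightarrow> bool" where
  "guarded_in X TT = True" | "guarded_in X FF = True"
| "guarded_in X (Or p q) = (guarded_in X p \<and> guarded_in X q)"
| "guarded_in X (And p q) = (guarded_in X p \<and> guarded_in X q)"
| "guarded_in X (Dia A p) = True"
| "guarded_in X (Box A p) = True"
| "guarded_in X (Min Y p) = (X = Y \<or> guarded_in X p)"
| "guarded_in X (Max Y p) = (X = Y \<or> guarded_in X p)"
| "guarded_in X (Var Y) = (X \<noteq> Y)"

fun guarded :: "('a, 'x) form \<Rightarrow> bool" where
  "guarded TT = True" | "guarded FF = True"
| "guarded (Or p q) = (guarded p \<and> guarded q)"
| "guarded (And p q) = (guarded p \<and> guarded q)"
| "guarded (Dia A p) = guarded p"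
| "guarded (Box A p) = guarded p"
| "guarded (Min X p) = (guarded_in X p \<and> guarded p)"
| "guarded (Max X p) = (guarded_in X p \<and> guarded p)"
| "guarded (Var X) = True"

fun semL :: "('a, 'x) form \<Rightarrow> ('x \<Rightarrow> 'a stream set) \<Rightarrow> 'a stream set" where
  "semL TT \<sigma> = UNIV"
| "semL FF \<sigma> = {}"
| "semL (Or p q) \<sigma> = semL p \<sigma> \<union> semL q \<sigma>"
| "semL (And p q) \<sigma> = semL p \<sigma> \<inter> semL q \<sigma>"
| "semL (Dia A p) \<sigma> = {a ## g | a g. a \<in> A \<and> g \<in> semL p \<sigma>}"
| "semL (Box A p) \<sigma> = {g. \<forall>a\<in>A. \<forall>g'. g = a ## g' \<longrightarrow> g' \<in> semL p \<sigma>}"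
| "semL (Min X p) \<sigma> = \<Inter>{S. semL p (\<sigma>(X := S)) \<subseteq> S}"
| "semL (Max X p) \<sigma> = \<Union>{S. S \<subseteq> semL p (\<sigma>(X := S))}"
| "semL (Var X) \<sigma> = \<sigma> X"

datatype 'a ftrace = FinT "'a list" | InfT "'a stream"

fun fcons :: "'a \<Rightarrow> 'a ftrace \<Rightarrow> 'a ftrace" where
  "fcons a (FinT l) = FinT (a # l)"
| "fcons a (InfT s) = InfT (a ## s)"

fun semF :: "('a, 'x) form \<Rightarrow> ('x \<Rightarrow> 'a ftrace set) \<Rightarrow> 'a ftrace set" where
  "semF TT \<sigma> = UNIV"
| "semF FF \<sigma> = {}"
| "semF (Or p q) \<sigma> = semF p \<sigma> \<union> semF q \<sigma>"
| "semF (And p q) \<sigma> = semF p \<sigma> \<inter> semF q \<sigma>"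
| "semF (Dia A p) \<sigma> = {fcons a g | a g. a \<in> A \<and> g \<in> semF p \<sigma>}"
| "semF (Box A p) \<sigma> = {g. \<forall>a\<in>A. \<forall>g'. g = fcons a g' \<longrightarrow> g' \<in> semF p \<sigma>}"
| "semF (Min X p) \<sigma> = \<Inter>{S. semF p (\<sigma>(X := S)) \<subseteq> S}"
| "semF (Max X p) \<sigma> = \<Union>{S. S \<subseteq> semF p (\<sigma>(X := S))}"
| "semF (Var X) \<sigma> = \<sigma> X"

end

theory Submission
  imports Defs
begin

lemma semF_mono: "(\<And>X. \<sigma> X \<subseteq> \<sigma>' X) \<Longrightarrow> semF p \<sigma> \<subseteq> semF p \<sigma>'"
proof (induction p arbitrary: \<sigma> \<sigma>')
  case (Min X p)
  have h: "\<And>S. semF p (\<sigma>(X:=S)) \<subseteq> semF p (\<sigma>'(X:=S))"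
    by (rule Min.IH) (use Min.prems in auto)
  show ?case unfolding semF.simps
    by (rule Inf_superset_mono) (use h in blast)
next
  case (Max X p)
  have h: "\<And>S. semF p (\<sigma>(X:=S)) \<subseteq> semF p (\<sigma>'(X:=S))"
    by (rule Max.IH) (use Max.prems in auto)
  show ?case unfolding semF.simps
    by (rule Sup_subset_mono) (use h in blast)
next
  case (Or p q)
  have "semF p \<sigma> \<subseteq> semF p \<sigma>'" by (rule Or.IH(1)) (rule Or.prems)
  moreover have "semF q \<sigma> \<subseteq> semF q \<sigma>'" by (rule Or.IH(2)) (rule Or.prems)
  ultimately show ?case unfolding semF.simps by (rule Un_mono)
next
  case (And p q)
  have "semF p \<sigma> \<subseteq> semF p \<sigma>'" by (rule And.IH(1)) (rule And.prems)
  moreover have "semF q \<sigma> \<subseteq> semF q \<sigma>'" by (rule And.IH(2)) (rule And.prems)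
  ultimately show ?case unfolding semF.simps by (rule Int_mono)
next
  case (Dia A p) 
  have "semF p \<sigma> \<subseteq> semF p \<sigma>'" by (rule Dia.IH) (rule Dia.prems)
  then show ?case unfolding semF.simps by blast
next
  case (Box A p)
  have "semF p \<sigma> \<subseteq> semF p \<sigma>'" by (rule Box.IH) (rule Box.prems)
  then show ?case unfolding semF.simps by blast
next
  case (Var X) then show ?case by simp
qed simp_all

lemma semL_mono: "(\<And>X. \<sigma> X \<subseteq> \<sigma>' X) \<Longrightarrow> semL p \<sigma> \<subseteq> semL p \<sigma>'"
proof (induction p arbitrary: \<sigma> \<sigma>')
  case (Min X p)
  have h: "\<And>S. semL p (\<sigma>(X:=S)) \<subseteq> semL p (\<sigma>'(X:=S))"
    by (rule Min.IH) (use Min.prems in auto)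
  show ?case unfolding semL.simps
    by (rule Inf_superset_mono) (use h in blast)
next
  case (Max X p)
  have h: "\<And>S. semL p (\<sigma>(X:=S)) \<subseteq> semL p (\<sigma>'(X:=S))"
    by (rule Max.IH) (use Max.prems in auto)
  show ?case unfolding semL.simps
    by (rule Sup_subset_mono) (use h in blast)
next
  case (Or p q)
  have "semL p \<sigma> \<subseteq> semL p \<sigma>'" by (rule Or.IH(1)) (rule Or.prems)
  moreover have "semL q \<sigma> \<subseteq> semL q \<sigma>'" by (rule Or.IH(2)) (rule Or.prems)
  ultimately show ?case unfolding semL.simps by (rule Un_mono)
next
  case (And p q)
  have "semL p \<sigma> \<subseteq> semL p \<sigma>'" by (rule And.IH(1)) (rule And.prems)
  moreover have "semL q \<sigma> \<subseteq> semL q \<sigma>'" by (rule And.IH(2)) (rule And.prems)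
  ultimately show ?case unfolding semL.simps by (rule Int_mono)
next
  case (Dia A p) 
  have "semL p \<sigma> \<subseteq> semL p \<sigma>'" by (rule Dia.IH) (rule Dia.prems)
  then show ?case unfolding semL.simps by blast
next
  case (Box A p)
  have "semL p \<sigma> \<subseteq> semL p \<sigma>'" by (rule Box.IH) (rule Box.prems)
  then show ?case unfolding semL.simps by blast
next
  case (Var X) then show ?case by simp
qed simp_all

lemma semF_Min_lfp: "semF (Min X p) \<sigma> = lfp (\<lambda>S. semF p (\<sigma>(X:=S)))"
  by (simp add: lfp_def)
lemma semF_Max_gfp: "semF (Max X p) \<sigma> = gfp (\<lambda>S. semF p (\<sigma>(X:=S)))"
  by (simp add: gfp_def)
lemma semL_Min_lfp: "semL (Min X p) \<sigma> = lfp (\<lambda>S. semL p (\<sigma>(X:=S)))"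
  by (simp add: lfp_def)
lemma semL_Max_gfp: "semL (Max X p) \<sigma> = gfp (\<lambda>S. semL p (\<sigma>(X:=S)))"
  by (simp add: gfp_def)

lemma monoF: "mono (\<lambda>S. semF p (\<sigma>(X:=S)))"
  by (rule monoI, rule semF_mono, simp)
lemma monoL: "mono (\<lambda>S. semL p (\<sigma>(X:=S)))"
  by (rule monoI, rule semL_mono, simp)

definition r :: "'a ftrace set \<Rightarrow> 'a stream set" where
  "r T = {s. InfT s \<in> T}"

lemma fcons_InfT: "(InfT s = fcons a g) \<longleftrightarrow> (\<exists>s'. g = InfT s' \<and> s = a ## s')"
  by (cases g) auto

lemma main:
  "(\<And>X. r (\<sigma>F X) = \<sigma>L X) \<Longrightarrow> r (semF p \<sigma>F) = semL p \<sigma>L"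
proof (induction p arbitrary: \<sigma>F \<sigma>L)
  case TT then show ?case by (simp add: r_def)
next
  case FF then show ?case by (simp add: r_def)
next
  case (Or p q)
  have 1: "r (semF p \<sigma>F) = semL p \<sigma>L" by (rule Or.IH(1)) (rule Or.prems)
  have 2: "r (semF q \<sigma>F) = semL q \<sigma>L" by (rule Or.IH(2)) (rule Or.prems)
  have "r (A \<union> B) = r A \<union> r B" for A B by (auto simp: r_def)
  then show ?case using 1 2 by (metis semF.simps semL.simps)
next
  case (And p q)
  have 1: "r (semF p \<sigma>F) = semL p \<sigma>L" by (rule And.IH(1)) (rule And.prems)
  have 2: "r (semF q \<sigma>F) = semL q \<sigma>L" by (rule And.IH(2)) (rule And.prems)
  have "r (A \<inter> B) = r A \<inter> r B" for A B by (auto simp: r_def)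
  then show ?case using 1 2 by (metis semF.simps semL.simps)
next
  case (Dia A p)
  have ih: "r (semF p \<sigma>F) = semL p \<sigma>L" by (rule Dia.IH) (rule Dia.prems)
  show ?case
  proof (rule set_eqI, rule iffI)
    fix s assume "s \<in> r (semF (Dia A p) \<sigma>F)"
    then obtain a g where "InfT s = fcons a g" "a \<in> A" "g \<in> semF p \<sigma>F" by (auto simp: r_def)
    then show "s \<in> semL (Dia A p) \<sigma>L" using ih by (auto simp: fcons_InfT r_def)
  next
    fix s assume "s \<in> semL (Dia A p) \<sigma>L"
    then obtain a g where "s = a ## g" "a \<in> A" "g \<in> semL p \<sigma>L" by auto
    then show "s \<in> r (semF (Dia A p) \<sigma>F)" using ih
      by (auto simp: r_def intro!: exI[of _ "InfT g"])
  qed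
next
  case (Box A p)
  have ih: "r (semF p \<sigma>F) = semL p \<sigma>L" by (rule Box.IH) (rule Box.prems)
  show ?case using ih by (auto simp: r_def fcons_InfT)
next
  case (Var X) then show ?case by simp
next
  case (Min X p)
  let ?F = "\<lambda>S. semF p (\<sigma>F(X:=S))"
  let ?G = "\<lambda>S. semL p (\<sigma>L(X:=S))"
  have comm: "r (?F S) = ?G (r S)" for S
    by (rule Min.IH) (simp add: Min.prems)
  have "r (lfp ?F) = lfp ?G"
  proof
    show "lfp ?G \<subseteq> r (lfp ?F)"
      by (rule lfp_lowerbound) (metis comm lfp_unfold[OF monoF] order_refl)
  next
    show "r (lfp ?F) \<subseteq> lfp ?G"
    proof -
      let ?S = "InfT ` lfp ?G \<union> range FinT"
      have rS: "r ?S = lfp ?G" by (auto simp: r_def)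
      have "?F ?S \<subseteq> ?S"
      proof
        fix t assume t: "t \<in> ?F ?S"
        show "t \<in> ?S"
        proof (cases t)
          case (InfT s)
          have "s \<in> r (?F ?S)" using t InfT by (simp add: r_def)
          then have "s \<in> lfp ?G" using comm rS lfp_unfold[OF monoL] by metis
          then show ?thesis using InfT by auto
        qed auto
      qed
      then have "lfp ?F \<subseteq> ?S" by (rule lfp_lowerbound)
      then show ?thesis using rS by (auto simp: r_def)
    qed
  qed
  then show ?case by (simp only: semF_Min_lfp semL_Min_lfp)
next
  case (Max X p)
  let ?F = "\<lambda>S. semF p (\<sigma>F(X:=S))"
  let ?G = "\<lambda>S. semL p (\<sigma>L(X:=S))"
  have comm: "r (?F S) = ?G (r S)" for S
    by (rule Max.IH) (simp add: Max.prems)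
  have "r (gfp ?F) = gfp ?G"
  proof
    show "r (gfp ?F) \<subseteq> gfp ?G"
      by (rule gfp_upperbound) (metis comm gfp_unfold[OF monoF] order_refl)
  next
    show "gfp ?G \<subseteq> r (gfp ?F)"
    proof -
      let ?S = "InfT ` gfp ?G"
      have rS: "r ?S = gfp ?G" by (auto simp: r_def)
      have "?S \<subseteq> ?F ?S"
      proof
        fix t assume t: "t \<in> ?S"
        then obtain s where s: "t = InfT s" "s \<in> gfp ?G" by auto
        then have "s \<in> r (?F ?S)" using comm rS gfp_unfold[OF monoL] by metis
        then show "t \<in> ?F ?S" using s by (simp add: r_def)
      qed
      then have "?S \<subseteq> gfp ?F" by (rule gfp_upperbound)
      then show ?thesis using rS by (auto simp: r_def)
    qed
  qed
  then show ?case by (simp only: semF_Max_gfp semL_Max_gfp)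
qed

lemma semF_fv: "(\<And>X. X \<in> fv p \<Longrightarrow> \<sigma> X = \<sigma>' X) \<Longrightarrow> semF p \<sigma> = semF p \<sigma>'"
proof (induction p arbitrary: \<sigma> \<sigma>')
  case (Min X p)
  have "\<And>S. semF p (\<sigma>(X:=S)) = semF p (\<sigma>'(X:=S))"
    by (rule Min.IH) (use Min.prems in auto)
  then show ?case by (simp only: semF.simps)
next
  case (Max X p)
  have "\<And>S. semF p (\<sigma>(X:=S)) = semF p (\<sigma>'(X:=S))"
    by (rule Max.IH) (use Max.prems in auto)
  then show ?case by (simp only: semF.simps)
next
  case (Or p q)
  have "semF p \<sigma> = semF p \<sigma>'" by (rule Or.IH(1)) (use Or.prems in auto)
  moreover have "semF q \<sigma> = semF q \<sigma>'" by (rule Or.IH(2)) (use Or.prems in auto)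
  ultimately show ?case by (simp only: semF.simps)
next
  case (And p q)
  have "semF p \<sigma> = semF p \<sigma>'" by (rule And.IH(1)) (use And.prems in auto)
  moreover have "semF q \<sigma> = semF q \<sigma>'" by (rule And.IH(2)) (use And.prems in auto)
  ultimately show ?case by (simp only: semF.simps)
next
  case (Dia A p)
  have "semF p \<sigma> = semF p \<sigma>'" by (rule Dia.IH) (use Dia.prems in auto)
  then show ?case by (simp only: semF.simps)
next
  case (Box A p)
  have "semF p \<sigma> = semF p \<sigma>'" by (rule Box.IH) (use Box.prems in auto)
  then show ?case by (simp only: semF.simps)
qed auto

theorem mainTheorem13:
  fixes \<phi> :: "('a::finite, 'x) form"
    and \<sigma>F :: "'x \<Rightarrow> 'a ftrace set"
    and \<sigma>L :: "'x \<Rightarrow> 'a stream set"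
  assumes "closed \<phi>" and "guarded \<phi>"
  shows "{s. InfT s \<in> semF \<phi> \<sigma>F} = semL \<phi> \<sigma>L"
proof -
  have "semF \<phi> \<sigma>F = semF \<phi> (\<lambda>X. InfT ` \<sigma>L X)"
    by (rule semF_fv) (use assms(1) in \<open>simp add: closed_def\<close>)
  moreover have "r (semF \<phi> (\<lambda>X. InfT ` \<sigma>L X)) = semL \<phi> \<sigma>L"
    by (rule main) (auto simp: r_def)
  ultimately show ?thesis by (simp add: r_def)
qed

end
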